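(* Let $1\le i\le n-1$. The map $\mathfrak S_i(1243,2143)\times\mathfrak S_{n-i}(1243,2143)\to\mathfrak S_n(1243,2143)$, $(\pi_1,\pi_2)\mapsto\pi_1*\pi_2$, is a bijection onto the set of $\pi\in\mathfrak S_n(1243,2143)$ with $\pi(i+1)=n$. Moreover, for all $k\ge1$, $\pi_1\in\mathfrak S_i(1243,2143)$, $\pi_2\in\mathfrak S_{n-i}(1243,2143)$, $$\tau_k(\pi_1*\pi_2)=\tau_k(\pi_1)+\tau_{k-1}(\pi_1)+\tau_k(\pi_2).$$
   Context: $\mathfrak S_m(R)$ is the set of permutations of $\{1,\dots,m\}$ avoiding every pattern in $R$ (no subsequence with the same relative order as a pattern). $\tau_k(\pi)$ is the number of increasing subsequences of length $k$ in $\pi$ for $k\ge1$, and $\tau_0(\pi)=0$. For nonempty permutations $\pi_1,\pi_2$: let $\tilde\pi_1$ be obtained by adding $|\pi_2|-1$ to every entry of $\pi_1$ and then replacing the entry equal to $|\pi_2|$ by the first entry of $\pi_2$; let $\tilde\pi_2$ be $\pi_2$ with its first entry deleted; then $\pi_1*\pi_2=\tilde\pi_1,\ N,\ \tilde\pi_2$ (concatenation) where $N=|\pi_1|+|\pi_2|$. E.g. $3124*15342=716895342$. *)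

theory Defs
  imports Main
begin

definition is_perm :: "nat \<Rightarrow> nat list \<Rightarrow> bool" where
  "is_perm m p \<longleftrightarrow> length p = m \<and> set p = {1..m}"

definition contains :: "nat list \<Rightarrow> nat list \<Rightarrow> bool" where
  "contains p s \<longleftrightarrow> (\<exists>js. sorted_wrt (<) js \<and> length js = length s \<and>
      (\<forall>j\<in>set js. j < length p) \<and>
      (\<forall>a<length s. \<forall>b<length s. (p ! (js ! a) < p ! (js ! b) \<longleftrightarrow> s ! a < s ! b)))"

definition avoids :: "nat list \<Rightarrow> nat list \<Rightarrow> bool" where
  "avoids p s \<longleftrightarrow> \<not> contains p s"

definition Av :: "nat \<Rightarrow> nat list set \<Rightarrow> nat list set" where
  "Av m R = {p. is_perm m p \<and> (\<forall>s\<in>R. avoids p s)}"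

definition tau :: "nat \<Rightarrow> nat list \<Rightarrow> nat" where
  "tau k p = (if k = 0 then 0 else
     card {js. sorted_wrt (<) js \<and> length js = k \<and> (\<forall>j\<in>set js. j < length p) \<and>
               sorted_wrt (<) (map ((!) p) js)})"

definition star :: "nat list \<Rightarrow> nat list \<Rightarrow> nat list" where
  "star p1 p2 =
     (let n2 = length p2;
          t1 = map (\<lambda>x. if x + n2 - 1 = n2 then hd p2 else x + n2 - 1) p1
      in t1 @ [length p1 + n2] @ tl p2)"

lemma star_example: "star [3,1,2,4] [1,5,3,4,2] = [7,1,6,8,9,5,3,4,2]"
  by (simp add: star_def)

end

theory Submission
  imports Defs
begin


lemma is_perm_distinct: "is_perm m p \<Longrightarrow> distinct p"
  unfolding is_perm_def by (simp add: card_distinct)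

lemma is_permI: "length p = m \<Longrightarrow> distinct p \<Longrightarrow> set p \<subseteq> {1..m} \<Longrightarrow> is_perm m p"
  unfolding is_perm_def
  by (metis card_atLeastAtMost card_subset_eq diff_Suc_1 distinct_card finite_atLeastAtMost)

lemma sorted_wrt_cong_set:
  "(\<And>x y. x \<in> set xs \<Longrightarrow> y \<in> set xs \<Longrightarrow> P x y \<longleftrightarrow> Q x y) \<Longrightarrow> sorted_wrt P xs = sorted_wrt Q xs"
  by (induction xs) auto

lemma contains_via:
  assumes "sorted_wrt (<) js" "length js = length s" "\<forall>j\<in>set js. j < length q"
    "\<forall>a<length s. \<forall>b<length s. (q ! (js ! a) < q ! (js ! b) \<longleftrightarrow> s ! a < s ! b)"
    "\<forall>x\<in>set js. \<forall>y\<in>set js. x < y \<longrightarrow> h x < h y"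
    "\<forall>x\<in>set js. h x < length p"
    "\<forall>x\<in>set js. \<forall>y\<in>set js. (p ! h x < p ! h y \<longleftrightarrow> q ! x < q ! y)"
  shows "contains p s"
  unfolding contains_def
proof (intro exI[of _ "map h js"] conjI)
  show "sorted_wrt (<) (map h js)" unfolding sorted_wrt_map
    using assms(1,5) sorted_wrt_mono_rel by (metis (no_types, lifting))
  show "length (map h js) = length s" using assms by simp
  show "\<forall>j\<in>set (map h js). j < length p" using assms by auto
  show "\<forall>a<length s. \<forall>b<length s. (p ! (map h js ! a) < p ! (map h js ! b)) = (s ! a < s ! b)"
    using assms(2,4,7) by (simp add: nth_mem)
qed

lemma len4: "length js = 4 \<Longrightarrow> \<exists>a b c d. js = [a,b,c,d]"
  by (simp add: numeral_eq_Suc length_Suc_conv) blast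

lemma pat1243:
  assumes "a<b" "b<c" "c<d" "d<length p" "p!a<p!b" "p!b<p!d" "p!d<p!c"
  shows "contains p [1,2,4,3]"
  unfolding contains_def
  apply (rule exI[of _ "[a,b,c,d]"])
  using assms by (auto simp: less_Suc_eq numeral_eq_Suc)

lemma pat2143:
  assumes "a<b" "b<c" "c<d" "d<length p" "p!b<p!a" "p!a<p!d" "p!d<p!c"
  shows "contains p [2,1,4,3]"
  unfolding contains_def
  apply (rule exI[of _ "[a,b,c,d]"])
  using assms by (auto simp: less_Suc_eq numeral_eq_Suc)



locale SP =
  fixes p1 p2 :: "nat list"
  assumes p1: "is_perm (length p1) p1" and p2: "is_perm (length p2) p2"
    and ne1: "p1 \<noteq> []" and ne2: "p2 \<noteq> []"
begin

definition "q = star p1 p2"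
definition "m0 = (SOME j. j < length p1 \<and> p1!j = 1)"
definition "h j = (if j < length p1 then 0 else j - length p1)"
definition "h' j = (if j = 0 then m0 else length p1 + j)"
definition "good x \<longleftrightarrow> x = m0 \<or> (length p1 < x \<and> x < length p1 + length p2)"

lemma d1: "distinct p1" using p1 is_perm_distinct by blast
lemma d2: "distinct p2" using p2 is_perm_distinct by blast

lemma v1: "j < length p1 \<Longrightarrow> 1 \<le> p1!j \<and> p1!j \<le> length p1"
  using p1 unfolding is_perm_def by (metis atLeastAtMost_iff nth_mem)
lemma v2: "j < length p2 \<Longrightarrow> 1 \<le> p2!j \<and> p2!j \<le> length p2"
  using p2 unfolding is_perm_def by (metis atLeastAtMost_iff nth_mem)

lemma m0: "m0 < length p1 \<and> p1!m0 = 1"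
proof -
  have "1 \<in> set p1" using p1 ne1 unfolding is_perm_def by (auto simp: Suc_le_eq)
  then have "\<exists>j. j < length p1 \<and> p1!j = 1" by (metis in_set_conv_nth)
  then show ?thesis unfolding m0_def by (rule someI_ex)
qed

lemma m0_iff: "j < length p1 \<Longrightarrow> p1!j = 1 \<longleftrightarrow> j = m0"
  using m0 d1 nth_eq_iff_index_eq by metis

lemma q_len: "length q = length p1 + length p2"
  unfolding q_def star_def Let_def using ne2 by simp

lemma q_lt: "j < length p1 \<Longrightarrow> q!j = (if p1!j = 1 then p2!0 else p1!j + length p2 - 1)"
  unfolding q_def star_def Let_def using ne2 v1[of j]
  by (auto simp: nth_append hd_conv_nth)

lemma q_eq: "q!(length p1) = length p1 + length p2"
  unfolding q_def star_def Let_def by (simp add: nth_append)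

lemma q_gt: "length p1 < j \<Longrightarrow> j < length p1 + length p2 \<Longrightarrow> q!j = p2!(j - length p1)"
  unfolding q_def star_def Let_def using ne2
  by (auto simp: nth_append nth_tl)
     (metis Suc_diff_Suc)


lemma q_order1: "x < length p1 \<Longrightarrow> y < length p1 \<Longrightarrow> (q!x < q!y \<longleftrightarrow> p1!x < p1!y)"
  using q_lt[of x] q_lt[of y] v1[of x] v1[of y] v2[of 0] ne2 by auto

lemma q_big: "j < length p1 \<Longrightarrow> j \<noteq> m0 \<Longrightarrow> length p2 < q!j"
  using q_lt[of j] v1[of j] m0_iff[of j] by auto

lemma good_q: "good x \<Longrightarrow> q!x = p2!(h x) \<and> h x < length p2"
  unfolding good_def h_def using m0 q_lt[of m0] q_gt[of x] ne2 by auto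

lemma good_mono: "good x \<Longrightarrow> good y \<Longrightarrow> (x < y \<longleftrightarrow> h x < h y)"
  unfolding good_def h_def using m0 by auto

lemma hh': "good x \<Longrightarrow> h' (h x) = x"
  unfolding good_def h_def h'_def using m0 by auto

lemma h'h: "j < length p2 \<Longrightarrow> h (h' j) = j \<and> good (h' j)"
  unfolding good_def h_def h'_def using m0 by auto

lemma h'_mono: "x < y \<Longrightarrow> h' x < h' y"
  unfolding h'_def using m0 by auto

lemma q_h': "j < length p2 \<Longrightarrow> q!(h' j) = p2!j \<and> h' j < length q"
  using h'h[of j] good_q[of "h' j"] q_len m0 unfolding good_def by auto

lemma embed1: "contains p1 s \<Longrightarrow> contains q s"
proof -
  assume "contains p1 s"
  then obtain js where js: "sorted_wrt (<) js" "length js = length s" "\<forall>j\<in>set js. j < length p1"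
    "\<forall>a<length s. \<forall>b<length s. (p1 ! (js ! a) < p1 ! (js ! b) \<longleftrightarrow> s ! a < s ! b)"
    unfolding contains_def by blast
  show ?thesis
    by (rule contains_via[OF js, of id]) (use js(3) q_len q_order1 in auto)
qed

lemma embed2: "contains p2 s \<Longrightarrow> contains q s"
proof -
  assume "contains p2 s"
  then obtain js where js: "sorted_wrt (<) js" "length js = length s" "\<forall>j\<in>set js. j < length p2"
    "\<forall>a<length s. \<forall>b<length s. (p2 ! (js ! a) < p2 ! (js ! b) \<longleftrightarrow> s ! a < s ! b)"
    unfolding contains_def by blast
  show ?thesis
    by (rule contains_via[OF js, of h']) (use js(3) q_h' h'_mono in auto)
qed

lemma q_perm: "is_perm (length p1 + length p2) q"
proof (rule is_permI)
  show "length q = length p1 + length p2" by (rule q_len)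
  show "set q \<subseteq> {1..length p1 + length p2}"
  proof
    fix v assume "v \<in> set q"
    then obtain j where j: "j < length q" "v = q!j" by (metis in_set_conv_nth)
    consider "j < length p1" | "j = length p1" | "length p1 < j" by linarith
    then show "v \<in> {1..length p1 + length p2}"
    proof cases
      case 3
      then have "j - length p1 < length p2" using j q_len by linarith
      then show ?thesis using 3 j q_len q_gt[of j] v2[of "j - length p1"] by auto
    next
      case 1
      then show ?thesis using j q_lt[of j] v1[of j] v2[of 0] ne2 by auto
    next
      case 2
      then show ?thesis using j q_eq ne2 by (auto simp: Suc_le_eq)
    qed
  qed
  show "distinct q"
    unfolding distinct_conv_nth
  proof (intro allI impI)
    fix x y assume xy: "x < length q" "y < length q" "x \<noteq> y"
    have cl: "\<And>x. x < length q \<Longrightarrow> (x < length p1 \<and> x \<noteq> m0) \<or> x = length p1 \<or> good x"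
      unfolding good_def using q_len by auto
    have inj2: "\<And>x y. good x \<Longrightarrow> good y \<Longrightarrow> x \<noteq> y \<Longrightarrow> q!x \<noteq> q!y"
      using good_q hh' d2 nth_eq_iff_index_eq by metis
    have inj1: "\<And>x y. x < length p1 \<Longrightarrow> y < length p1 \<Longrightarrow> x \<noteq> y \<Longrightarrow> q!x \<noteq> q!y"
      using q_order1 d1 nth_eq_iff_index_eq by (metis linorder_neq_iff)
    have bigeq: "\<And>x. x < length p1 \<Longrightarrow> q!x < length p1 + length p2"
      using q_lt v1 v2[of 0] ne2 by fastforce
    have goodsmall: "\<And>x. good x \<Longrightarrow> q!x \<le> length p2" using good_q v2 by metis
    have m0l: "m0 < length p1" using m0 by blast
    have gl: "\<And>x. good x \<Longrightarrow> x \<noteq> length p1 \<and> (x < length p1 \<longrightarrow> x = m0)"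
      unfolding good_def using m0l by auto
    have n2: "0 < length p1" using ne1 by simp
    show "q!x \<noteq> q!y"
    proof (cases "x < length p1 \<and> y < length p1")
      case True then show ?thesis using inj1 xy(3) by blast
    next
      case False
      show ?thesis
      proof (cases "good x \<and> good y")
        case True then show ?thesis using inj2 xy(3) by blast
      next
        case F2: False
        from cl[OF xy(1)] cl[OF xy(2)] False F2 xy(3) gl
        consider "x = length p1" "y < length p1" | "y = length p1" "x < length p1"
          | "x = length p1" "good y" | "y = length p1" "good x"
          | "x < length p1" "x \<noteq> m0" "good y" | "y < length p1" "y \<noteq> m0" "good x"
          by metis
        then show ?thesis
        proof cases
          case 1 then show ?thesis using q_eq bigeq by (metis less_irrefl)
        next
          case 2 then show ?thesis using q_eq bigeq by (metis less_irrefl)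
        next
          case 3 then have "q!x = length p1 + length p2" "q!y \<le> length p2" using q_eq goodsmall[of y] by auto
          then show ?thesis using n2 by linarith
        next
          case 4 then have "q!y = length p1 + length p2" "q!x \<le> length p2" using q_eq goodsmall[of x] by auto
          then show ?thesis using n2 by linarith
        next
          case 5 then show ?thesis using q_big[of x] goodsmall[of y] by auto
        next
          case 6 then show ?thesis using q_big[of y] goodsmall[of x] by auto
        qed
      qed
    qed
  qed
qed

end


definition dec :: "nat \<Rightarrow> nat \<Rightarrow> nat list \<Rightarrow> nat list \<times> nat list" where
  "dec n i p = (let L = take i p; m = Min (set L) in
     (map (\<lambda>x. if x = m then 1 else x + 1 - (n - i)) L, m # drop (i+1) p))"

context SP begin

lemma q_val: "j < length q \<Longrightarrow> 1 \<le> q!j \<and> q!j \<le> length p1 + length p2"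
  using q_perm unfolding is_perm_def by (metis atLeastAtMost_iff nth_mem)

lemma q_avoid:
  assumes s: "s \<in> {[1,2,4,3],[2,1,4,3]}" and a1: "avoids p1 s" and a2: "avoids p2 s"
  shows "avoids q s"
  unfolding avoids_def
proof
  assume "contains q s"
  then obtain js where js: "sorted_wrt (<) js" "length js = length s" "\<forall>j\<in>set js. j < length q"
    "\<forall>a<length s. \<forall>b<length s. (q ! (js ! a) < q ! (js ! b) \<longleftrightarrow> s ! a < s ! b)"
    unfolding contains_def by blast
  have ls: "length s = 4" using s by auto
  then obtain a b c d where abcd: "js = [a,b,c,d]" using len4 js(2) by metis
  have ord: "a < b" "b < c" "c < d" "d < length q" using js(1,3) abcd by auto
  have cmp: "\<And>x y. x < 4 \<Longrightarrow> y < 4 \<Longrightarrow> (q ! (js ! x) < q ! (js ! y) \<longleftrightarrow> s ! x < s ! y)"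
    using js(4) ls by auto
  have hcd: "q!d < q!c" using cmp[of 3 2] s abcd by auto
  have had: "q!a < q!d" using cmp[of 0 3] s abcd by auto
  have hbd: "q!b < q!d" using cmp[of 1 3] s abcd by auto
  consider "d < length p1" | "d = length p1" | "length p1 < d" by linarith
  then show False
  proof cases
    case 1
    have "contains p1 s"
    proof (rule contains_via[OF js, of id])
      show "\<forall>x\<in>set js. \<forall>y\<in>set js. x < y \<longrightarrow> id x < id y" by simp
      show "\<forall>x\<in>set js. id x < length p1" using abcd ord 1 by auto
      show "\<forall>x\<in>set js. \<forall>y\<in>set js. (p1 ! id x < p1 ! id y) = (q ! x < q ! y)"
        using abcd ord 1 q_order1 by auto
    qed
    then show False using a1 unfolding avoids_def by blast
  next
    case 2
    then show False using hcd q_eq q_val[of c] ord by auto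
  next
    case 3
    have dg: "good d" unfolding good_def using 3 ord q_len by auto
    have qd: "q!d \<le> length p2" using good_q[OF dg] v2 by metis
    have n2: "0 < length p1" using ne1 by simp
    have sm: "\<And>x. x < d \<Longrightarrow> q!x < q!d \<Longrightarrow> good x"
    proof -
      fix x assume x: "x < d" "q!x < q!d"
      show "good x"
      proof (rule ccontr)
        assume ng: "\<not> good x"
        consider "x < length p1" "x \<noteq> m0" | "x = length p1" using ng x(1) ord 3 q_len
          unfolding good_def by linarith
        then show False
        proof cases
          case 1 then show False using q_big[of x] x qd by linarith
        next
          case 2 then have "q!x = length p1 + length p2" using q_eq by simp
          then show False using x qd n2 by linarith
        qed
      qed
    qed
    have ga: "good a" using sm[of a] ord had by simp
    have gb: "good b" using sm[of b] ord hbd by simp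
    have b3: "length p1 < b" using ga gb ord m0 unfolding good_def by auto
    have gc: "good c" unfolding good_def using b3 ord q_len by auto
    have G: "\<forall>x\<in>set js. good x" using abcd ga gb gc dg by auto
    have "contains p2 s"
    proof (rule contains_via[OF js, of h])
      show "\<forall>x\<in>set js. \<forall>y\<in>set js. x < y \<longrightarrow> h x < h y" using G good_mono by blast
      show "\<forall>x\<in>set js. h x < length p2" using G good_q by blast
      show "\<forall>x\<in>set js. \<forall>y\<in>set js. (p2 ! h x < p2 ! h y) = (q ! x < q ! y)"
        using G good_q by metis
    qed
    then show False using a2 unfolding avoids_def by blast
  qed
qed

lemma hd2: "hd p2 = p2!0 \<and> 1 \<le> p2!0 \<and> p2!0 \<le> length p2"
  using ne2 v2[of 0] by (simp add: hd_conv_nth)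

lemma one_in: "1 \<in> set p1" using m0 by (metis nth_mem)

lemma vals1: "x \<in> set p1 \<Longrightarrow> 1 \<le> x \<and> x \<le> length p1"
  using v1 by (metis in_set_conv_nth)

lemma dec_q: "dec (length p1 + length p2) (length p1) q = (p1, p2)"
proof -
  define g where "g = (\<lambda>x. if x + length p2 - 1 = length p2 then hd p2 else x + length p2 - 1)"
  have tk: "take (length p1) q = map g p1" unfolding q_def star_def Let_def g_def by simp
  have dr: "drop (length p1 + 1) q = tl p2" unfolding q_def star_def Let_def by simp
  have g1: "g 1 = hd p2" unfolding g_def by simp
  have g2: "\<And>x. x \<in> set p1 \<Longrightarrow> x \<noteq> 1 \<Longrightarrow> g x = x + length p2 - 1 \<and> length p2 < g x"
    unfolding g_def using vals1 by fastforce
  have mn: "Min (set (map g p1)) = hd p2"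
  proof (rule Min_eqI)
    show "finite (set (map g p1))" by simp
    show "hd p2 \<in> set (map g p1)" using one_in g1 by force
    show "\<And>y. y \<in> set (map g p1) \<Longrightarrow> hd p2 \<le> y"
      using g1 g2 hd2 by fastforce
  qed
  have mp: "map (\<lambda>x. if x = hd p2 then 1 else x + 1 - (length p1 + length p2 - length p1)) (map g p1) = p1"
    unfolding map_map
  proof (rule map_idI)
    fix x assume x: "x \<in> set p1"
    show "((\<lambda>x. if x = hd p2 then 1 else x + 1 - (length p1 + length p2 - length p1)) \<circ> g) x = x"
    proof (cases "x = 1")
      case True then show ?thesis using g1 by simp
    next
      case False then show ?thesis using g2[OF x] hd2 vals1[OF x] by auto
    qed
  qed
  show ?thesis unfolding dec_def Let_def tk dr mn mp using ne2 by simp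
qed

end


definition incs :: "nat list \<Rightarrow> nat \<Rightarrow> nat list set" where
  "incs p k = {js. sorted_wrt (<) js \<and> length js = k \<and> (\<forall>j\<in>set js. j < length p) \<and>
               sorted_wrt (<) (map ((!) p) js)}"

lemma tau_incs: "k \<noteq> 0 \<Longrightarrow> tau k p = card (incs p k)"
  unfolding tau_def incs_def by simp

lemma fin_incs: "finite (incs p k)"
proof (rule finite_subset)
  show "incs p k \<subseteq> {xs. set xs \<subseteq> {..<length p} \<and> length xs = k}" unfolding incs_def by auto
  show "finite {xs. set xs \<subseteq> {..<length p} \<and> length xs = k}"
    by (rule finite_lists_length_eq) simp
qed

lemma tau1: "tau 1 p = length p"
proof -
  have "incs p 1 = (\<lambda>j. [j]) ` {..<length p}"
  proof (intro set_eqI iffI)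
    fix js assume a: "js \<in> incs p 1"
    then have "length js = 1" unfolding incs_def by blast
    then obtain j where j: "js = [j]" by (metis One_nat_def length_0_conv length_Suc_conv)
    then show "js \<in> (\<lambda>j. [j]) ` {..<length p}" using a unfolding incs_def by auto
  next
    fix js assume "js \<in> (\<lambda>j. [j]) ` {..<length p}"
    then show "js \<in> incs p 1" unfolding incs_def by auto
  qed
  then have "card (incs p 1) = length p" by (simp add: card_image inj_on_def)
  then show ?thesis using tau_incs by simp
qed

lemma bl_last: assumes "js \<noteq> []" "x \<in> set js" "x \<noteq> last js" shows "x \<in> set (butlast js)"
proof -
  from assms(2) have "x \<in> set (butlast js @ [last js])" by (subst append_butlast_last_id[OF assms(1)])
  then show ?thesis using assms(3) by simp
qed

lemma last_ge: "sorted_wrt (<) (js::nat list) \<Longrightarrow> x \<in> set js \<Longrightarrow> x \<le> last js"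
proof -
  assume s: "sorted_wrt (<) js" and x: "x \<in> set js"
  have ne: "js \<noteq> []" using x by auto
  show ?thesis
  proof (cases "x = last js")
    case False
    have xb: "x \<in> set (butlast js)" using bl_last[OF ne x False] .
    have "sorted_wrt (<) (butlast js @ [last js])" using s by (subst append_butlast_last_id[OF ne])
    then have "\<forall>y\<in>set (butlast js). y < last js" unfolding sorted_wrt_append by simp
    then show ?thesis using xb by auto
  qed simp
qed

lemma last_gt: "sorted_wrt (<) (map (f::nat\<Rightarrow>nat) js) \<Longrightarrow> x \<in> set js \<Longrightarrow> x \<noteq> last js \<Longrightarrow> f x < f (last js)"
proof -
  assume s: "sorted_wrt (<) (map f js)" and x: "x \<in> set js" "x \<noteq> last js"
  have ne: "js \<noteq> []" using x by auto
  have xb: "x \<in> set (butlast js)" using bl_last[OF ne x(1) x(2)] .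
  have "sorted_wrt (<) (map f (butlast js) @ [f (last js)])"
  proof -
    have e1: "f (last js) = last (map f js)" using ne by (simp add: last_map)
    have e2: "map f (butlast js) = butlast (map f js)" by (simp add: map_butlast)
    have e3: "map f js \<noteq> []" using ne by simp
    have "map f (butlast js) @ [f (last js)] = map f js" unfolding e1 e2 using append_butlast_last_id[OF e3] .
    then show ?thesis using s by simp
  qed
  then have "\<forall>y\<in>set (map f (butlast js)). y < f (last js)" unfolding sorted_wrt_append by simp
  then show ?thesis using xb by auto
qed

context SP begin

lemma sq1: "\<forall>x\<in>set js. x < length p1 \<Longrightarrow>
  sorted_wrt (<) (map ((!) q) js) \<longleftrightarrow> sorted_wrt (<) (map ((!) p1) js)"
  unfolding sorted_wrt_map by (rule sorted_wrt_cong_set) (use q_order1 in auto)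

lemma q_lt_N: "x < length p1 \<Longrightarrow> q!x < length p1 + length p2"
  using q_lt[of x] v1[of x] hd2 ne2 by auto

lemma tau_main:
  assumes k: "2 \<le> k"
  shows "tau k q = tau k p1 + tau (k - 1) p1 + tau k p2"
proof -
  let ?i = "length p1"
  define A where "A = {js \<in> incs q k. last js < ?i}"
  define B where "B = {js \<in> incs q k. last js = ?i}"
  define C where "C = {js \<in> incs q k. ?i < last js}"
  have U: "incs q k = A \<union> B \<union> C" unfolding A_def B_def C_def by auto
  have fA: "finite A" "finite B" "finite C" unfolding A_def B_def C_def using fin_incs by auto
  have cU: "card (incs q k) = card A + card B + card C"
    unfolding U using fA
    by (subst card_Un_disjoint, simp, simp, force simp: A_def B_def C_def)
       (subst card_Un_disjoint, auto simp: A_def B_def)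
  have ne: "\<And>js. js \<in> incs q k \<Longrightarrow> js \<noteq> []" unfolding incs_def using k by auto
  have ne1': "\<And>js. js \<in> incs p1 k \<Longrightarrow> js \<noteq> []" unfolding incs_def using k by auto
  have eA: "A = incs p1 k"
  proof (intro set_eqI iffI)
    fix js assume a: "js \<in> A"
    then have all: "\<forall>x\<in>set js. x < ?i" unfolding A_def incs_def using last_ge by fastforce
    then show "js \<in> incs p1 k" using a sq1[OF all] unfolding A_def incs_def by auto
  next
    fix js assume a: "js \<in> incs p1 k"
    then have all: "\<forall>x\<in>set js. x < ?i" unfolding incs_def by auto
    have "last js \<in> set js" using ne1'[OF a] by simp
    then show "js \<in> A" using a sq1[OF all] all q_len unfolding A_def incs_def by auto
  qed
  have eB: "B = (\<lambda>js. js @ [?i]) ` incs p1 (k - 1)"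
  proof (intro set_eqI iffI)
    fix js assume a: "js \<in> B"
    then have nej: "js \<noteq> []" using ne unfolding B_def by auto
    define ys where "ys = butlast js"
    have lj: "last js = ?i" using a unfolding B_def by simp
    have js: "js = ys @ [?i]" using append_butlast_last_id[OF nej] unfolding ys_def lj by simp
    have s1: "sorted_wrt (<) (ys @ [?i])" using a js unfolding B_def incs_def by simp
    then have all: "\<forall>x\<in>set ys. x < ?i" unfolding sorted_wrt_append by simp
    have s2: "sorted_wrt (<) (map ((!) q) ys)" using a js unfolding B_def incs_def by (simp add: sorted_wrt_append)
    have "ys \<in> incs p1 (k - 1)" unfolding incs_def
      using s1 all sq1[OF all] s2 a js unfolding B_def incs_def sorted_wrt_append by auto
    then show "js \<in> (\<lambda>js. js @ [?i]) ` incs p1 (k - 1)" using js by blast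
  next
    fix js assume "js \<in> (\<lambda>js. js @ [?i]) ` incs p1 (k - 1)"
    then obtain ys where ys: "ys \<in> incs p1 (k - 1)" and js: "js = ys @ [?i]" by blast
    have all: "\<forall>x\<in>set ys. x < ?i" using ys unfolding incs_def by auto
    have s2: "sorted_wrt (<) (map ((!) q) ys)" using ys sq1[OF all] unfolding incs_def by simp
    have v: "\<forall>x\<in>set ys. q!x < q!?i" using all q_lt_N q_eq by auto
    show "js \<in> B" unfolding B_def incs_def js
      using ys all s2 v k q_len ne2 unfolding incs_def by (auto simp: sorted_wrt_append)
  qed
  have cB: "card B = card (incs p1 (k - 1))" unfolding eB
    by (rule card_image) (simp add: inj_on_def)
  have C1: "\<And>js. js \<in> C \<Longrightarrow> \<forall>x\<in>set js. good x"
  proof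
    fix js x assume js: "js \<in> C" and x: "x \<in> set js"
    have nej: "js \<noteq> []" using js ne unfolding C_def by auto
    have lj: "last js \<in> set js" using nej by simp
    have gl: "good (last js)" using js lj q_len unfolding C_def incs_def good_def by auto
    show "good x"
    proof (cases "x = last js")
      case True then show ?thesis using gl by simp
    next
      case False
      have lt: "q!x < q!(last js)" using last_gt[of "(!) q" js x] js x False unfolding C_def incs_def by auto
      have qd: "q!(last js) \<le> length p2" using good_q[OF gl] v2 by metis
      have xl: "x < last js" using last_ge[of js x] js x False unfolding C_def incs_def by auto
      have xN: "x < length p1 + length p2" using js x q_len unfolding C_def incs_def by auto
      have n2: "0 < length p1" using ne1 by simp
      show ?thesis
      proof (rule ccontr)
        assume ng: "\<not> good x"
        consider "x < length p1" "x \<noteq> m0" | "x = length p1" using ng xN unfolding good_def by linarith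
        then show False
        proof cases
          case 1 then show False using q_big[of x] lt qd by linarith
        next
          case 2 then have "q!x = length p1 + length p2" using q_eq by simp
          then show False using lt qd n2 by linarith
        qed
      qed
    qed
  qed
  have cC: "card C = card (incs p2 k)"
  proof (rule bij_betw_same_card, rule bij_betw_byWitness[where f' = "map h'"])
    show "\<forall>js\<in>C. map h' (map h js) = js"
      using C1 hh' by (simp add: map_idI)
    show "\<forall>ks\<in>incs p2 k. map h (map h' ks) = ks"
      using h'h unfolding incs_def by (simp add: map_idI)
    show "map h ` C \<subseteq> incs p2 k"
    proof
      fix ys assume "ys \<in> map h ` C"
      then obtain js where js: "js \<in> C" and ys: "ys = map h js" by blast
      have G: "\<forall>x\<in>set js. good x" using C1[OF js] .
      have s1: "sorted_wrt (<) (map h js)" unfolding sorted_wrt_map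
        using js G good_mono sorted_wrt_mono_rel unfolding C_def incs_def by (metis (no_types, lifting) mem_Collect_eq)
      have e: "map ((!) p2) (map h js) = map ((!) q) js" using G good_q by simp
      have s2: "sorted_wrt (<) (map ((!) p2) (map h js))" unfolding e using js unfolding C_def incs_def by simp
      have l: "length (map h js) = k" using js unfolding C_def incs_def by simp
      have ix: "\<forall>j\<in>set (map h js). j < length p2" using G good_q by auto
      show "ys \<in> incs p2 k" unfolding ys incs_def using s1 s2 l ix by blast
    qed
    show "map h' ` incs p2 k \<subseteq> C"
    proof
      fix js assume "js \<in> map h' ` incs p2 k"
      then obtain ks where ks: "ks \<in> incs p2 k" and js: "js = map h' ks" by blast
      have all: "\<forall>x\<in>set ks. x < length p2" using ks unfolding incs_def by auto
      have s1: "sorted_wrt (<) (map h' ks)" unfolding sorted_wrt_map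
        using ks h'_mono sorted_wrt_mono_rel unfolding incs_def by (metis (no_types, lifting) mem_Collect_eq)
      have e: "map ((!) q) (map h' ks) = map ((!) p2) ks" using all q_h' by simp
      have lk: "length ks = k" using ks unfolding incs_def by simp
      have sk: "sorted_wrt (<) ks" using ks unfolding incs_def by simp
      have "ks!0 < ks!1" using sk lk k sorted_wrt_nth_less by fastforce
      moreover have "ks!1 \<le> last ks" using last_ge[OF sk, of "ks!1"] lk k by simp
      ultimately have lpos: "0 < last ks" by linarith
      have nek: "ks \<noteq> []" using lk k by auto
      have "last js = h' (last ks)" using js nek by (simp add: last_map)
      then have "?i < last js" using lpos unfolding h'_def by simp
      moreover have s2: "sorted_wrt (<) (map ((!) q) (map h' ks))" unfolding e using ks unfolding incs_def by simp
      moreover have l: "length (map h' ks) = k" using lk by simp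
      moreover have ix: "\<forall>j\<in>set (map h' ks). j < length q" using all q_h' by auto
      ultimately show "js \<in> C" unfolding C_def incs_def using s1 js by blast
    qed
  qed
  have k0: "k \<noteq> 0" "k - 1 \<noteq> 0" using k by auto
  show ?thesis unfolding tau_incs[OF k0(1)] tau_incs[OF k0(2)] cU eA cB cC by simp
qed

end


lemma dec_props:
  assumes P: "is_perm n p" and pi: "p!i = n" and i1: "1 \<le> i" and iN: "i < n"
    and av1: "avoids p [1,2,4,3]" and av2: "avoids p [2,1,4,3]"
  shows "is_perm i (fst (dec n i p)) \<and> is_perm (n-i) (snd (dec n i p))
         \<and> star (fst (dec n i p)) (snd (dec n i p)) = p"
proof -
  define L where "L = take i p"
  define R where "R = drop (i+1) p"
  define m where "m = Min (set L)"
  define f where "f = (\<lambda>x. if x = m then 1 else x + 1 - (n - i))"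
  have dp: "distinct p" using P is_perm_distinct by blast
  have lp: "length p = n" using P unfolding is_perm_def by simp
  have sp: "set p = {1..n}" using P unfolding is_perm_def by simp
  have pd: "p = L @ [n] @ R" unfolding L_def R_def using id_take_nth_drop[of i p] lp iN pi by simp
  have lL: "length L = i" unfolding L_def using lp iN by simp
  have lR: "length R = n - i - 1" unfolding R_def using lp by simp
  have dd: "distinct (L @ [n] @ R)" using dp pd by simp
  then have dL: "distinct L" and dR: "distinct R" and nL: "n \<notin> set L" and nR: "n \<notin> set R"
    and disj: "set L \<inter> set R = {}" by auto
  have valL: "\<And>x. x \<in> set L \<Longrightarrow> 1 \<le> x \<and> x \<le> n" using sp pd by (metis Un_iff atLeastAtMost_iff set_append)
  have valR: "\<And>x. x \<in> set R \<Longrightarrow> 1 \<le> x \<and> x \<le> n" using sp pd by (metis Un_iff atLeastAtMost_iff set_append)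
  have neL: "L \<noteq> []" using lL i1 by auto
  have mL: "m \<in> set L" unfolding m_def using neL by simp
  have mle: "\<And>x. x \<in> set L \<Longrightarrow> m \<le> x" unfolding m_def by simp
  have mR: "m \<notin> set R" using mL disj by blast
  have pL: "\<And>j. j < i \<Longrightarrow> p!j = L!j" unfolding L_def by simp
  have pR: "\<And>j. j < length R \<Longrightarrow> p!(i+1+j) = R!j" unfolding R_def using lp iN by simp
  have key: "\<And>x r. x \<in> set L \<Longrightarrow> x \<noteq> m \<Longrightarrow> r \<in> set R \<Longrightarrow> r < x"
  proof (rule ccontr)
    fix x r assume x: "x \<in> set L" "x \<noteq> m" and r: "r \<in> set R" and nlt: "\<not> r < x"
    have xr: "x < r" using nlt x(1) r disj by (metis IntI empty_iff linorder_neqE_nat)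
    have mx: "m < x" using mle[OF x(1)] x(2) by simp
    obtain jx where jx: "jx < i" "L!jx = x" using x(1) lL by (metis in_set_conv_nth)
    obtain jm where jm: "jm < i" "L!jm = m" using mL lL by (metis in_set_conv_nth)
    obtain jr where jr: "jr < length R" "R!jr = r" using r by (metis in_set_conv_nth)
    have rn: "r < n" using valR[OF r] r nR by (metis le_neq_implies_less)
    have d: "i + 1 + jr < length p" using jr lR lp iN by simp
    have pc: "p!i = n" by (rule pi)
    have pdv: "p!(i+1+jr) = r" using pR jr by simp
    have pxv: "p!jx = x" using pL jx by simp
    have pmv: "p!jm = m" using pL jm by simp
    have "jm \<noteq> jx" using jx jm x(2) by auto
    then consider "jm < jx" | "jx < jm" by linarith
    then show False
    proof cases
      case 1
      have "contains p [1,2,4,3]"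
        by (rule pat1243[of jm jx i "i+1+jr"]) (use 1 jx d pc pdv pxv pmv mx xr rn in auto)
      then show False using av1 unfolding avoids_def by blast
    next
      case 2
      have "contains p [2,1,4,3]"
        by (rule pat2143[of jx jm i "i+1+jr"]) (use 2 jm d pc pdv pxv pmv mx xr rn in auto)
      then show False using av2 unfolding avoids_def by blast
    qed
  qed
  have cR: "card (insert m (set R)) = n - i"
    using mR dR lR iN by (simp add: distinct_card)
  have gt: "\<And>x. x \<in> set L \<Longrightarrow> x \<noteq> m \<Longrightarrow> n - i < x"
  proof -
    fix x assume x: "x \<in> set L" "x \<noteq> m"
    have "insert m (set R) \<subseteq> {1..<x}"
      using key[OF x] mle[OF x(1)] x(2) valR valL[OF mL] by fastforce
    then have "card (insert m (set R)) \<le> card {1..<x}" by (rule card_mono[rotated]) simp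
    then have "n - i \<le> x - 1" using cR by simp
    then show "n - i < x" using iN by linarith
  qed
  have le: "\<And>y. y \<in> insert m (set R) \<Longrightarrow> y \<le> n - i"
  proof -
    fix y assume y: "y \<in> insert m (set R)"
    define T where "T = insert n (insert y (set L - {m}))"
    have yL: "y \<notin> set L - {m}" using y disj by auto
    have yn: "y \<noteq> n" using y nR nL mL by auto
    have cL: "card (set L - {m}) = i - 1" using mL dL lL by (simp add: distinct_card)
    have cT: "card T = i + 1" unfolding T_def using yL yn nL cL i1 by simp
    have "T \<subseteq> {y..n}"
    proof
      fix t assume "t \<in> T"
      then consider "t = n" | "t = y" | "t \<in> set L" "t \<noteq> m" unfolding T_def by auto
      then show "t \<in> {y..n}"
      proof cases
        case 1 then show ?thesis using y valR valL[OF mL] by auto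
      next
        case 2 then show ?thesis using y valR valL[OF mL] by auto
      next
        case 3
        have "y < t" using y key[OF 3] mle[OF 3(1)] 3(2) by fastforce
        then show ?thesis using valL[OF 3(1)] by auto
      qed
    qed
    then have "card T \<le> card {y..n}" by (rule card_mono[rotated]) simp
    then show "y \<le> n - i" using cT by simp
  qed
  have dec: "dec n i p = (map f L, m # R)" unfolding dec_def Let_def L_def R_def m_def f_def by simp
  have perm1: "is_perm i (map f L)"
  proof (rule is_permI)
    show "length (map f L) = i" using lL by simp
    have "inj_on f (set L)"
    proof
      fix x y assume x: "x \<in> set L" and y: "y \<in> set L" and e: "f x = f y"
      show "x = y"
      proof (cases "x = m"; cases "y = m")
        assume "x \<noteq> m" "y \<noteq> m" then show ?thesis using e gt x y unfolding f_def by fastforce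
      next
        assume "x = m" "y \<noteq> m" then show ?thesis using e gt[OF y] unfolding f_def by auto
      next
        assume "x \<noteq> m" "y = m" then show ?thesis using e gt[OF x] unfolding f_def by auto
      qed simp
    qed
    then show "distinct (map f L)" using dL by (simp add: distinct_map)
    show "set (map f L) \<subseteq> {1..i}"
    proof
      fix v assume "v \<in> set (map f L)"
      then obtain x where x: "x \<in> set L" "v = f x" by auto
      have "x \<le> n" "x \<noteq> n" using valL[OF x(1)] x(1) nL by auto
      then show "v \<in> {1..i}" using x gt[OF x(1)] iN i1 unfolding f_def by auto
    qed
  qed
  have perm2: "is_perm (n - i) (m # R)"
  proof (rule is_permI)
    show "length (m # R) = n - i" using lR iN by simp
    show "distinct (m # R)" using mR dR by simp
    show "set (m # R) \<subseteq> {1..n - i}" using le valR valL[OF mL] by auto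
  qed
  have st: "star (map f L) (m # R) = p"
  proof -
    have "map (\<lambda>x. if x + length (m # R) - 1 = length (m # R) then hd (m # R) else x + length (m # R) - 1) (map f L) = L"
      unfolding map_map
    proof (rule map_idI)
      fix x assume x: "x \<in> set L"
      have l2: "length (m # R) = n - i" using lR iN by simp
      show "((\<lambda>x. if x + length (m # R) - 1 = length (m # R) then hd (m # R) else x + length (m # R) - 1) \<circ> f) x = x"
        unfolding l2 using gt[OF x] unfolding f_def by auto
    qed
    moreover have "length (map f L) + length (m # R) = n" using lL lR iN by simp
    ultimately show ?thesis unfolding star_def Let_def using pd by simp
  qed
  show ?thesis unfolding dec using perm1 perm2 st by simp
qed

lemma SP_Av:
  assumes "p1 \<in> Av i S" "p2 \<in> Av j S" "1 \<le> i" "1 \<le> j"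
  shows "SP p1 p2"
proof
  have a: "is_perm i p1" "is_perm j p2" using assms(1,2) unfolding Av_def by auto
  then have l: "length p1 = i" "length p2 = j" unfolding is_perm_def by auto
  show "is_perm (length p1) p1" "is_perm (length p2) p2" using a l by auto
  show "p1 \<noteq> []" "p2 \<noteq> []" using l assms(3,4) by auto
qed

theorem mainTheorem9:
  fixes n i :: nat
  assumes "1 \<le> i" and "i \<le> n - 1"
  shows "bij_betw (\<lambda>(p1, p2). star p1 p2)
           (Av i {[1,2,4,3], [2,1,4,3]} \<times> Av (n - i) {[1,2,4,3], [2,1,4,3]})
           {p \<in> Av n {[1,2,4,3], [2,1,4,3]}. p ! i = n}
       \<and> (\<forall>k\<ge>1. \<forall>p1\<in>Av i {[1,2,4,3], [2,1,4,3]}. \<forall>p2\<in>Av (n - i) {[1,2,4,3], [2,1,4,3]}.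
            tau k (star p1 p2) = tau k p1 + tau (k - 1) p1 + tau k p2)"
proof -
  define S :: "nat list set" where "S = {[1,2,4,3], [2,1,4,3]}"
  have iN: "i < n" and ni: "1 \<le> n - i" using assms by auto
  have lens: "\<And>p1 p2. p1 \<in> Av i S \<Longrightarrow> p2 \<in> Av (n - i) S \<Longrightarrow> length p1 = i \<and> length p2 = n - i"
    unfolding Av_def is_perm_def by auto
  have bij: "bij_betw (\<lambda>(p1, p2). star p1 p2) (Av i S \<times> Av (n - i) S) {p \<in> Av n S. p ! i = n}"
  proof (rule bij_betw_byWitness[where f' = "dec n i"])
    show "\<forall>a\<in>Av i S \<times> Av (n - i) S. dec n i (case a of (p1, p2) \<Rightarrow> star p1 p2) = a"
    proof
      fix a assume a: "a \<in> Av i S \<times> Av (n - i) S"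
      obtain p1 p2 where a': "a = (p1, p2)" by (cases a)
      have m: "p1 \<in> Av i S" "p2 \<in> Av (n - i) S" using a a' by auto
      have sp: "SP p1 p2" using SP_Av[OF m assms(1) ni] .
      have "dec n i (star p1 p2) = (p1, p2)"
        using SP.dec_q[OF sp] lens[OF m] iN unfolding SP.q_def[OF sp] by simp
      then show "dec n i (case a of (p1, p2) \<Rightarrow> star p1 p2) = a" using a' by simp
    qed
    show "\<forall>a'\<in>{p \<in> Av n S. p ! i = n}. (case dec n i a' of (p1, p2) \<Rightarrow> star p1 p2) = a'"
    proof
      fix p assume p: "p \<in> {p \<in> Av n S. p ! i = n}"
      have "is_perm n p" "avoids p [1,2,4,3]" "avoids p [2,1,4,3]" "p!i = n"
        using p unfolding Av_def S_def by auto
      then have "star (fst (dec n i p)) (snd (dec n i p)) = p" using dec_props assms(1) iN by blast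
      then show "(case dec n i p of (p1, p2) \<Rightarrow> star p1 p2) = p" by (simp add: split_beta)
    qed
    show "(\<lambda>(p1, p2). star p1 p2) ` (Av i S \<times> Av (n - i) S) \<subseteq> {p \<in> Av n S. p ! i = n}"
    proof
      fix p assume "p \<in> (\<lambda>(p1, p2). star p1 p2) ` (Av i S \<times> Av (n - i) S)"
      then obtain p1 p2 where m: "p1 \<in> Av i S" "p2 \<in> Av (n - i) S" and p: "p = star p1 p2" by auto
      have sp: "SP p1 p2" using SP_Av[OF m assms(1) ni] .
      have l: "length p1 + length p2 = n" using lens[OF m] iN by simp
      have perm: "is_perm n p" using SP.q_perm[OF sp] l unfolding p SP.q_def[OF sp] by simp
      have pi: "p ! i = n" using SP.q_eq[OF sp] l lens[OF m] unfolding p SP.q_def[OF sp] by simp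
      have av: "\<forall>s\<in>S. avoids p s"
      proof
        fix s assume s: "s \<in> S"
        have "avoids p1 s" "avoids p2 s" using m s unfolding Av_def by auto
        then show "avoids p s" using SP.q_avoid[OF sp, of s] s unfolding p SP.q_def[OF sp] S_def by blast
      qed
      show "p \<in> {p \<in> Av n S. p ! i = n}" using perm pi av unfolding Av_def by simp
    qed
    show "dec n i ` {p \<in> Av n S. p ! i = n} \<subseteq> Av i S \<times> Av (n - i) S"
    proof
      fix d assume "d \<in> dec n i ` {p \<in> Av n S. p ! i = n}"
      then obtain p where p: "p \<in> Av n S" "p ! i = n" and d: "d = dec n i p" by auto
      have pp: "is_perm n p" "avoids p [1,2,4,3]" "avoids p [2,1,4,3]"
        using p unfolding Av_def S_def by auto
      have D: "is_perm i (fst d)" "is_perm (n-i) (snd d)" "star (fst d) (snd d) = p"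
        using dec_props[OF pp(1) p(2) assms(1) iN pp(2,3)] d by auto
      have l: "length (fst d) = i" "length (snd d) = n - i" using D unfolding is_perm_def by auto
      have sp: "SP (fst d) (snd d)"
        by unfold_locales (use D l assms(1) ni in auto)
      have av: "\<And>s. s \<in> S \<Longrightarrow> avoids (fst d) s \<and> avoids (snd d) s"
      proof -
        fix s assume s: "s \<in> S"
        have "avoids p s" using p s unfolding Av_def by auto
        then show "avoids (fst d) s \<and> avoids (snd d) s"
          using SP.embed1[OF sp, of s] SP.embed2[OF sp, of s] D(3) unfolding avoids_def SP.q_def[OF sp]
          by auto
      qed
      have "fst d \<in> Av i S" "snd d \<in> Av (n - i) S" using D av unfolding Av_def by auto
      then show "d \<in> Av i S \<times> Av (n - i) S" by (simp add: mem_Times_iff)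
    qed
  qed
  have tau: "\<forall>k\<ge>1. \<forall>p1\<in>Av i S. \<forall>p2\<in>Av (n - i) S.
            tau k (star p1 p2) = tau k p1 + tau (k - 1) p1 + tau k p2"
  proof (intro allI impI ballI)
    fix k :: nat and p1 p2 assume k: "1 \<le> k" and m: "p1 \<in> Av i S" "p2 \<in> Av (n - i) S"
    have sp: "SP p1 p2" using SP_Av[OF m assms(1) ni] .
    show "tau k (star p1 p2) = tau k p1 + tau (k - 1) p1 + tau k p2"
    proof (cases "k = 1")
      case True
      have "tau 1 (star p1 p2) = length p1 + length p2"
        using tau1 SP.q_len[OF sp] unfolding SP.q_def[OF sp] by simp
      moreover have "tau 0 p1 = 0" unfolding tau_def by simp
      ultimately show ?thesis using True tau1 by simp
    next
      case False
      then have "2 \<le> k" using k by simp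
      then show ?thesis using SP.tau_main[OF sp] unfolding SP.q_def[OF sp] by simp
    qed
  qed
  show ?thesis using bij tau unfolding S_def by simp
qed

end
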